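(* (1) For every permutation $w\in S_k$ there is a sequence $\mathbf b=(b_1,\dots,b_{k-1})$ of non-negative integers with $\sum_i b_i=\ell(w)$ such that the coefficient of $v^{\mathbf b}$ in $R_w$ is non-zero. (2) For every matching sequence $\mathbf b=(b_1,\dots,b_{k-1})$ there is a permutation $w\in S_k$ with $\ell(w)=\sum_i b_i$ such that the coefficient of $v^{\mathbf b}$ in $R_w$ is non-zero.
   Context: Fix $k\ge 2$. Permutations $u\in S_k$ are written in one-line notation $u=(u(1),\dots,u(k))$. An inversion of $u$ is a pair of positions $(i,j)$ with $i<j$ and $u(i)>u(j)$; $\ell(u)$ is the number of inversions. For $1\le n<m\le k$ let $u\circ(n\,m)$ denote the permutation obtained from $u$ by swapping the entries in positions $n$ and $m$. We say $u'$ covers $u$ if $u'=u\circ(n\,m)$ for some $n<m$ and $\ell(u')=\ell(u)+1$; the weight of this cover is $v_n+v_{n+1}+\dots+v_{m-1}$. For $w\in S_k$, $R_w\in\mathbb Z[v_1,\dots,v_{k-1}]$ is the sum, over all chains $\mathrm{id}=u_0,u_1,\dots,u_{\ell(w)}=w$ in which each $u_{i+1}$ covers $u_i$, of the product of the weights of the covers $u_i\to u_{i+1}$. $v^{\mathbf b}=v_1^{b_1}\cdots v_{k-1}^{b_{k-1}}$. The bipartite graph $\mathcal B_{\mathbf b}$ has upper vertex class $U=\{(j,l):1\le j\le l\le k-1\}$ and lower vertex class $D_{\mathbf b}=\{(i,t):1\le i\le k-1,\ 1\le t\le b_i\}$, with an edge between $(j,l)\in U$ and $(i,t)\in D_{\mathbf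 b}$ if and only if $j\le i\le l$; $\mathbf b$ is a matching sequence if $\mathcal B_{\mathbf b}$ has a matching covering all of $D_{\mathbf b}$. *)

theory Defs
  imports Main "HOL-Library.Poly_Mapping" "HOL-Combinatorics.Transposition" "HOL-Combinatorics.Permutations"
begin

text \<open>Permutations of S_k are functions u :: nat => nat with u permutes {1..k};
  the one-line notation is (u 1, ..., u k).\<close>

definition inv_len :: "nat \<Rightarrow> (nat \<Rightarrow> nat) \<Rightarrow> nat" where
  "inv_len k u = card {(i, j). 1 \<le> i \<and> i < j \<and> j \<le> k \<and> u i > u j}"

definition swap_pos :: "(nat \<Rightarrow> nat) \<Rightarrow> nat \<Rightarrow> nat \<Rightarrow> (nat \<Rightarrow> nat)" where
  "swap_pos u n m = u \<circ> Transposition.transpose n m"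

text \<open>Polynomials in Z[v_1,...,v_{k-1}]: finitely supported maps from exponent
  vectors (nat =>0 nat) to int coefficients; v_i is the monomial with exponent 1 at i.\<close>
type_synonym poly_v = "(nat \<Rightarrow>\<^sub>0 nat) \<Rightarrow>\<^sub>0 int"

definition var_v :: "nat \<Rightarrow> poly_v" where
  "var_v i = Poly_Mapping.single (Poly_Mapping.single i 1) 1"

definition cover_weight :: "nat \<times> nat \<Rightarrow> poly_v" where
  "cover_weight p = (\<Sum>i\<in>{fst p..<snd p}. var_v i)"

text \<open>A chain id = u_0, ..., u_r is encoded by the list of transposition positions
  (n_1,m_1), ..., (n_r,m_r) with n_j < m_j and u_j = u_{j-1} o (n_j m_j);
  the pair (n,m) is uniquely determined by (u_{j-1}, u_j).\<close>
definition chain_step :: "(nat \<times> nat) list \<Rightarrow> nat \<Rightarrow> (nat \<Rightarrow> nat)" where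
  "chain_step ps j = foldl (\<lambda>u p. swap_pos u (fst p) (snd p)) id (take j ps)"

definition chains :: "nat \<Rightarrow> (nat \<Rightarrow> nat) \<Rightarrow> (nat \<times> nat) list set" where
  "chains k w = {ps. length ps = inv_len k w
      \<and> set ps \<subseteq> {(n, m). 1 \<le> n \<and> n < m \<and> m \<le> k}
      \<and> (\<forall>j < length ps. inv_len k (chain_step ps (Suc j)) = inv_len k (chain_step ps j) + 1)
      \<and> chain_step ps (length ps) = w}"

definition R_poly :: "nat \<Rightarrow> (nat \<Rightarrow> nat) \<Rightarrow> poly_v" where
  "R_poly k w = (\<Sum>ps\<in>chains k w. prod_list (map cover_weight ps))"

definition coeff_v :: "poly_v \<Rightarrow> (nat \<Rightarrow>\<^sub>0 nat) \<Rightarrow> int" where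
  "coeff_v P b = Poly_Mapping.lookup P b"

definition exp_seq :: "nat \<Rightarrow> (nat \<Rightarrow>\<^sub>0 nat) \<Rightarrow> bool" where
  "exp_seq k b \<longleftrightarrow> Poly_Mapping.keys b \<subseteq> {1..k-1}"

definition upper_B :: "nat \<Rightarrow> (nat \<times> nat) set" where
  "upper_B k = {(j, l). 1 \<le> j \<and> j \<le> l \<and> l \<le> k - 1}"

definition lower_B :: "nat \<Rightarrow> (nat \<Rightarrow>\<^sub>0 nat) \<Rightarrow> (nat \<times> nat) set" where
  "lower_B k b = {(i, t). 1 \<le> i \<and> i \<le> k - 1 \<and> 1 \<le> t \<and> t \<le> Poly_Mapping.lookup b i}"

definition matching_seq :: "nat \<Rightarrow> (nat \<Rightarrow>\<^sub>0 nat) \<Rightarrow> bool" where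
  "matching_seq k b \<longleftrightarrow> (\<exists>f. inj_on f (lower_B k b) \<and> f ` lower_B k b \<subseteq> upper_B k
      \<and> (\<forall>d\<in>lower_B k b. fst (f d) \<le> fst d \<and> fst d \<le> snd (f d)))"

end

theory Submission
  imports Defs
begin

lemma single_mult_lookup_aux:
  fixes Q :: poly_v
  shows "Poly_Mapping.lookup (Poly_Mapping.single m 1 * Q) j = (\<Sum>q. Poly_Mapping.lookup Q q when j = m + q)"
proof -
  have "Poly_Mapping.lookup (Poly_Mapping.single m 1 * Q) j
     = (\<Sum>l. (1 when m = l) * (\<Sum>q. Poly_Mapping.lookup Q q when j = l + q))"
    by (simp add: lookup_mult lookup_single, intro Sum_any.cong, auto simp: when_def)
  also have "\<dots> = (\<Sum>l. (\<Sum>q. Poly_Mapping.lookup Q q when j = l + q) when l = m)"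
    by (intro Sum_any.cong) (auto simp: when_def)
  also have "\<dots> = (\<Sum>q. Poly_Mapping.lookup Q q when j = m + q)"
    by simp
  finally show ?thesis .
qed

lemma single_mult_lookup:
  fixes Q :: poly_v
  shows "Poly_Mapping.lookup (Poly_Mapping.single m 1 * Q) (m + k) = Poly_Mapping.lookup Q k"
proof -
  have "(\<Sum>q. Poly_Mapping.lookup Q q when m + k = m + q) = (\<Sum>q. Poly_Mapping.lookup Q q when q = k)"
    by (intro Sum_any.cong) (auto simp: when_def)
  then show ?thesis by (simp add: single_mult_lookup_aux)
qed

lemma single_mult_nonneg:
  fixes Q :: poly_v
  assumes "\<And>j. Poly_Mapping.lookup Q j \<ge> 0"
  shows "Poly_Mapping.lookup (Poly_Mapping.single m 1 * Q) j \<ge> 0"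
proof (cases "\<exists>q. j = m + q")
  case True
  then obtain q where q: "j = m + q" by blast
  show ?thesis using assms by (simp add: q single_mult_lookup)
next
  case False
  then have "(\<Sum>q. Poly_Mapping.lookup Q q when j = m + q) = (\<Sum>q::nat\<Rightarrow>\<^sub>0nat. 0)"
    by (intro Sum_any.cong) (auto simp: when_def)
  then show ?thesis by (simp add: single_mult_lookup_aux)
qed

definition nonneg :: "poly_v \<Rightarrow> bool" where
  "nonneg Q \<longleftrightarrow> (\<forall>j. Poly_Mapping.lookup Q j \<ge> 0)"

lemma cw_mult_nonneg:
  assumes "nonneg Q"
  shows "nonneg (cover_weight p * Q)"
  using assms unfolding nonneg_def cover_weight_def var_v_def
  by (auto simp: sum_distrib_right lookup_sum intro!: sum_nonneg single_mult_nonneg)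

lemma cw_mult_ge:
  assumes "nonneg Q" "fst p \<le> i" "i < snd p"
  shows "Poly_Mapping.lookup (cover_weight p * Q) (Poly_Mapping.single i 1 + m) \<ge> Poly_Mapping.lookup Q m"
proof -
  have "Poly_Mapping.lookup (cover_weight p * Q) (Poly_Mapping.single i 1 + m)
     = (\<Sum>i'\<in>{fst p..<snd p}. Poly_Mapping.lookup (Poly_Mapping.single (Poly_Mapping.single i' 1) 1 * Q) (Poly_Mapping.single i 1 + m))"
    unfolding cover_weight_def var_v_def by (simp add: sum_distrib_right lookup_sum)
  also have "\<dots> \<ge> Poly_Mapping.lookup (Poly_Mapping.single (Poly_Mapping.single i 1) 1 * Q) (Poly_Mapping.single i 1 + m)"
    using assms by (intro member_le_sum) (auto intro: single_mult_nonneg simp: nonneg_def)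
  finally show ?thesis by (simp add: single_mult_lookup)
qed

lemma prod_cw:
  assumes "\<forall>p\<in>set ps. fst p \<le> \<sigma> p \<and> \<sigma> p < snd p"
  shows "nonneg (prod_list (map cover_weight ps)) \<and>
    Poly_Mapping.lookup (prod_list (map cover_weight ps)) (sum_list (map (\<lambda>p. Poly_Mapping.single (\<sigma> p) 1) ps)) \<ge> 1"
  using assms
proof (induction ps)
  case Nil
  then show ?case by (simp add: nonneg_def lookup_one when_def)
next
  case (Cons p ps)
  then have ih: "nonneg (prod_list (map cover_weight ps))"
    "Poly_Mapping.lookup (prod_list (map cover_weight ps)) (sum_list (map (\<lambda>p. Poly_Mapping.single (\<sigma> p) 1) ps)) \<ge> 1"
    by auto
  show ?case
    using cw_mult_nonneg[OF ih(1), of p] cw_mult_ge[OF ih(1), of p "\<sigma> p"] Cons.prems ih(2)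
    by (simp del: One_nat_def) (meson order_trans)
qed

definition invs :: "nat \<Rightarrow> (nat \<Rightarrow> nat) \<Rightarrow> (nat \<times> nat) set" where
  "invs k u = {(i, j). 1 \<le> i \<and> i < j \<and> j \<le> k \<and> u i > u j}"

lemma inv_len_invs: "inv_len k u = card (invs k u)"
  unfolding inv_len_def invs_def by simp

lemma finite_invs: "finite (invs k u)"
proof -
  have "invs k u \<subseteq> {1..k} \<times> {1..k}" unfolding invs_def by auto
  then show ?thesis by (rule finite_subset) auto
qed

lemma invs_swap_consec:
  assumes w: "w permutes {1..k}" and st: "1 \<le> s" "s < t" "t \<le> k"
    and ws: "w s = Suc v" and wt: "w t = v"
  shows "invs k w = insert (s, t) (invs k (swap_pos w s t)) \<and> (s, t) \<notin> invs k (swap_pos w s t)"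
proof -
  have inj: "inj w" using w by (rule permutes_inj)
  have ne: "w i \<noteq> Suc v \<and> w i \<noteq> v" if "i \<noteq> s" "i \<noteq> t" for i
    using inj that ws wt by (metis injD)
  have sw: "swap_pos w s t i = (if i = s then v else if i = t then Suc v else w i)" for i
    using ws wt st by (auto simp: swap_pos_def Transposition.transpose_def)
  show ?thesis
  proof
    show "invs k w = insert (s, t) (invs k (swap_pos w s t))"
    proof (rule set_eqI, clarify)
      fix i j
      show "((i, j) \<in> invs k w) = ((i, j) \<in> insert (s, t) (invs k (swap_pos w s t)))"
        using ne[of i] ne[of j] st ws wt unfolding invs_def sw
        by (cases "i = s"; cases "i = t"; cases "j = s"; cases "j = t") auto
    qed
    show "(s, t) \<notin> invs k (swap_pos w s t)" unfolding invs_def sw using st by auto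
  qed
qed

lemma exists_consec_aux:
  assumes w: "w permutes {1..k}"
  shows "\<forall>p1 p2. 1 \<le> p2 \<longrightarrow> p2 < p1 \<longrightarrow> p1 \<le> k \<longrightarrow> w p1 < w p2 \<longrightarrow> w p2 - w p1 = d
    \<longrightarrow> (\<exists>s t v. 1 \<le> s \<and> s < t \<and> t \<le> k \<and> w s = Suc v \<and> w t = v)"
proof (induction d rule: less_induct)
  case (less d)
  show ?case
  proof (intro allI impI)
    fix p1 p2
    assume h: "1 \<le> p2" "p2 < p1" "p1 \<le> k" "w p1 < w p2" "w p2 - w p1 = d"
    have "p2 \<in> {1..k}" "p1 \<in> {1..k}" using h by auto
    then have p2in: "w p2 \<in> {1..k}" and p1in: "w p1 \<in> {1..k}"
      using permutes_in_image[OF w] by blast+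
    have "Suc (w p1) \<in> {1..k}" using p2in p1in h by auto
    then have "Suc (w p1) \<in> w ` {1..k}" using permutes_image[OF w] by simp
    then obtain q where q: "q \<in> {1..k}" "w q = Suc (w p1)" by (metis imageE)
    show "\<exists>s t v. 1 \<le> s \<and> s < t \<and> t \<le> k \<and> w s = Suc v \<and> w t = v"
    proof (cases "q < p1")
      case True
      then show ?thesis using q h by (intro exI[of _ q] exI[of _ p1] exI[of _ "w p1"]) auto
    next
      case False
      have "q \<noteq> p1" using q by auto
      then have qp: "p1 < q" using False by auto
      have "q \<noteq> p2" using qp h by auto
      then have "w q \<noteq> w p2" using permutes_inj[OF w] by (metis injD)
      then have "w q < w p2" using q h by auto
      moreover have "w p2 - w q < d" using \<open>w q < w p2\<close> q h by auto
      ultimately show ?thesis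
        using less.IH[of "w p2 - w q", rule_format, of p2 q] q h qp by auto
    qed
  qed
qed

lemma exists_consec:
  assumes w: "w permutes {1..k}" and "invs k w \<noteq> {}"
  shows "\<exists>s t v. 1 \<le> s \<and> s < t \<and> t \<le> k \<and> w s = Suc v \<and> w t = v"
proof -
  obtain a c where "(a, c) \<in> invs k w" using assms by auto
  then have "1 \<le> a" "a < c" "c \<le> k" "w c < w a" unfolding invs_def by auto
  then show ?thesis using exists_consec_aux[OF w] by blast
qed

lemma no_invs_id:
  assumes w: "w permutes {1..k}" and e: "invs k w = {}"
  shows "w = id"
proof (rule ccontr)
  assume "w \<noteq> id"
  then have ex: "\<exists>t. w t \<noteq> t" by auto
  define t where "t = (LEAST t. w t \<noteq> t)"
  have wt: "w t \<noteq> t" unfolding t_def using ex by (rule LeastI_ex)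
  have below: "w s = s" if "s < t" for s using not_less_Least[of s "\<lambda>t. w t \<noteq> t"] that t_def by auto
  have tin: "t \<in> {1..k}" using wt w by (meson permutes_not_in)
  have inj: "inj w" using w by (rule permutes_inj)
  have "\<not> w t < t"
  proof
    assume "w t < t"
    then have "w (w t) = w t" using below by auto
    then show False using inj wt by (metis injD)
  qed
  then have gt: "t < w t" using wt by auto
  have "t \<in> w ` {1..k}" using permutes_image[OF w] tin by simp
  then obtain q where q: "q \<in> {1..k}" "w q = t" by (metis imageE)
  have "q \<noteq> t" using q wt by auto
  moreover have "\<not> q < t" using below q wt by (metis less_irrefl gt)
  ultimately have "t < q" by auto
  then have "(t, q) \<in> invs k w" using q tin gt unfolding invs_def by auto
  then show False using e by auto
qed

lemma chain_step_app_le: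
  "j \<le> length ps \<Longrightarrow> chain_step (ps @ [p]) j = chain_step ps j"
  unfolding chain_step_def by simp

lemma chain_step_app_last:
  "chain_step (ps @ [p]) (Suc (length ps)) = swap_pos (chain_step ps (length ps)) (fst p) (snd p)"
  unfolding chain_step_def by simp

lemma swap_pos_twice: "swap_pos (swap_pos w s t) s t = w"
  unfolding swap_pos_def by (auto simp: fun_eq_iff Transposition.transpose_def)

lemma chain_exists:
  "\<forall>w. w permutes {1..k} \<longrightarrow> card (invs k w) = L \<longrightarrow>
     (\<exists>ps. ps \<in> chains k w \<and> distinct ps \<and> set ps = invs k w)"
proof (induction L)
  case 0
  show ?case
  proof (intro allI impI)
    fix w :: "nat \<Rightarrow> nat"
    assume w: "w permutes {1..k}" and c: "card (invs k w) = 0"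
    have e: "invs k w = {}" using c finite_invs by auto
    then have "w = id" using no_invs_id w by blast
    then show "\<exists>ps. ps \<in> chains k w \<and> distinct ps \<and> set ps = invs k w"
      using e by (intro exI[of _ "[]"]) (auto simp: chains_def chain_step_def inv_len_invs)
  qed
next
  case (Suc L)
  show ?case
  proof (intro allI impI)
    fix w :: "nat \<Rightarrow> nat"
    assume w: "w permutes {1..k}" and c: "card (invs k w) = Suc L"
    have "invs k w \<noteq> {}" using c by auto
    then obtain s t v where st: "1 \<le> s" "s < t" "t \<le> k" "w s = Suc v" "w t = v"
      using exists_consec[OF w] by blast
    define w2 where "w2 = swap_pos w s t"
    have eq: "invs k w = insert (s, t) (invs k w2)" and nin: "(s, t) \<notin> invs k w2"
      using invs_swap_consec[OF w st] unfolding w2_def by auto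
    have w2p: "w2 permutes {1..k}" unfolding w2_def swap_pos_def
      using w st by (intro permutes_compose permutes_swap_id) auto
    have c2: "card (invs k w2) = L" using c eq nin finite_invs by auto
    obtain ps where ps: "ps \<in> chains k w2" "distinct ps" "set ps = invs k w2"
      using Suc.IH w2p c2 by blast
    have lenps: "length ps = inv_len k w2" and last2: "chain_step ps (length ps) = w2"
      and steps: "\<forall>j < length ps. inv_len k (chain_step ps (Suc j)) = inv_len k (chain_step ps j) + 1"
      and setps: "set ps \<subseteq> {(n, m). 1 \<le> n \<and> n < m \<and> m \<le> k}"
      using ps(1) unfolding chains_def by auto
    have wback: "swap_pos w2 s t = w" unfolding w2_def by (rule swap_pos_twice)
    have lastw: "chain_step (ps @ [(s, t)]) (length (ps @ [(s, t)])) = w"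
      using chain_step_app_last[of ps "(s, t)"] last2 wback by simp
    have il: "inv_len k w = inv_len k w2 + 1"
      using c c2 by (simp add: inv_len_invs)
    have steps': "\<forall>j < length (ps @ [(s, t)]).
        inv_len k (chain_step (ps @ [(s, t)]) (Suc j)) = inv_len k (chain_step (ps @ [(s, t)]) j) + 1"
    proof (intro allI impI)
      fix j assume j: "j < length (ps @ [(s, t)])"
      show "inv_len k (chain_step (ps @ [(s, t)]) (Suc j)) = inv_len k (chain_step (ps @ [(s, t)]) j) + 1"
      proof (cases "j < length ps")
        case True
        then show ?thesis using steps chain_step_app_le[of j ps] chain_step_app_le[of "Suc j" ps] by auto
      next
        case False
        then have "j = length ps" using j by auto
        then show ?thesis using lastw il last2 chain_step_app_le[of j ps] by auto
      qed
    qed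
    show "\<exists>ps. ps \<in> chains k w \<and> distinct ps \<and> set ps = invs k w"
    proof (intro exI[of _ "ps @ [(s, t)]"] conjI)
      show "ps @ [(s, t)] \<in> chains k w"
        unfolding chains_def using lenps il setps st steps' lastw by auto
      show "distinct (ps @ [(s, t)])" using ps nin by auto
      show "set (ps @ [(s, t)]) = invs k w" using ps eq by auto
    qed
  qed
qed

lemma nonneg_prod: "nonneg (prod_list (map cover_weight ps))"
  by (induction ps) (auto simp: nonneg_def lookup_one when_def intro: cw_mult_nonneg[unfolded nonneg_def, rule_format])

lemma finite_chains: "finite (chains k w)"
proof -
  have "chains k w \<subseteq> {ps. set ps \<subseteq> {1..k} \<times> {1..k} \<and> length ps = inv_len k w}"
    unfolding chains_def by auto
  then show ?thesis by (rule finite_subset) (intro finite_lists_length_eq, auto)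
qed

lemma coeff_pos:
  assumes w: "w permutes {1..k}"
    and sig: "\<forall>p\<in>invs k w. fst p \<le> \<sigma> p \<and> \<sigma> p < snd p"
  shows "coeff_v (R_poly k w) (\<Sum>p\<in>invs k w. Poly_Mapping.single (\<sigma> p) 1) \<ge> 1"
proof -
  obtain ps where ps: "ps \<in> chains k w" "distinct ps" "set ps = invs k w"
    using chain_exists w by blast
  have "1 \<le> Poly_Mapping.lookup (prod_list (map cover_weight ps)) (sum_list (map (\<lambda>p. Poly_Mapping.single (\<sigma> p) 1) ps))"
    using prod_cw[of ps \<sigma>] sig ps(3) by auto
  also have "sum_list (map (\<lambda>p. Poly_Mapping.single (\<sigma> p) 1) ps) = (\<Sum>p\<in>invs k w. Poly_Mapping.single (\<sigma> p) 1)"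
    using ps by (simp add: sum_list_distinct_conv_sum_set)
  also have "Poly_Mapping.lookup (prod_list (map cover_weight ps)) (\<Sum>p\<in>invs k w. Poly_Mapping.single (\<sigma> p) 1)
     \<le> (\<Sum>qs\<in>chains k w. Poly_Mapping.lookup (prod_list (map cover_weight qs)) (\<Sum>p\<in>invs k w. Poly_Mapping.single (\<sigma> p) 1))"
    using ps(1) finite_chains nonneg_prod by (intro member_le_sum) (auto simp: nonneg_def)
  finally show ?thesis unfolding coeff_v_def R_poly_def by (simp add: lookup_sum)
qed

lemma lookup_sum_single:
  assumes "finite A"
  shows "Poly_Mapping.lookup (\<Sum>p\<in>A. Poly_Mapping.single (\<sigma> p) (1::nat)) i = card {p\<in>A. \<sigma> p = i}"
proof -
  have "Poly_Mapping.lookup (\<Sum>p\<in>A. Poly_Mapping.single (\<sigma> p) (1::nat)) i = (\<Sum>p\<in>A. if \<sigma> p = i then 1 else 0)"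
    unfolding lookup_sum by (intro sum.cong) (auto simp: lookup_single when_def)
  also have "\<dots> = card {p\<in>A. \<sigma> p = i}"
    using assms by (simp add: sum.If_cases Int_def conj_commute)
  finally show ?thesis .
qed

lemma mono_props:
  assumes "finite A" and rng: "\<forall>p\<in>A. \<sigma> p \<in> {1..k-1}"
  shows "exp_seq k (\<Sum>p\<in>A. Poly_Mapping.single (\<sigma> p) (1::nat))"
    and "(\<Sum>i\<in>{1..k-1}. Poly_Mapping.lookup (\<Sum>p\<in>A. Poly_Mapping.single (\<sigma> p) (1::nat)) i) = card A"
proof -
  show "exp_seq k (\<Sum>p\<in>A. Poly_Mapping.single (\<sigma> p) (1::nat))"
    unfolding exp_seq_def
  proof
    fix i assume "i \<in> Poly_Mapping.keys (\<Sum>p\<in>A. Poly_Mapping.single (\<sigma> p) (1::nat))"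
    then have "card {p\<in>A. \<sigma> p = i} \<noteq> 0"
      unfolding in_keys_iff lookup_sum_single[OF assms(1)] .
    then obtain p where "p \<in> A" "\<sigma> p = i" by (metis (mono_tags, lifting) Collect_empty_eq card.empty)
    then show "i \<in> {1..k-1}" using rng by auto
  qed
  have "(\<Sum>i\<in>{1..k-1}. Poly_Mapping.lookup (\<Sum>p\<in>A. Poly_Mapping.single (\<sigma> p) (1::nat)) i)
      = (\<Sum>i\<in>{1..k-1}. \<Sum>p\<in>A. if \<sigma> p = i then 1 else 0)"
    unfolding lookup_sum by (intro sum.cong) (auto simp: lookup_single when_def)
  also have "\<dots> = (\<Sum>p\<in>A. \<Sum>i\<in>{1..k-1}. if \<sigma> p = i then 1 else 0)"
    by (rule sum.swap)
  also have "\<dots> = (\<Sum>p\<in>A. 1)"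
    using rng by (intro sum.cong) (auto simp: sum.delta')
  finally show "(\<Sum>i\<in>{1..k-1}. Poly_Mapping.lookup (\<Sum>p\<in>A. Poly_Mapping.single (\<sigma> p) (1::nat)) i) = card A"
    by simp
qed

lemma part1:
  assumes w: "w permutes {1..k}"
  shows "\<exists>b. exp_seq k b \<and> (\<Sum>i\<in>{1..k-1}. Poly_Mapping.lookup b i) = inv_len k w
                 \<and> coeff_v (R_poly k w) b \<noteq> 0"
proof -
  have rng: "\<forall>p\<in>invs k w. fst p \<in> {1..k-1}" unfolding invs_def by auto
  have sig: "\<forall>p\<in>invs k w. fst p \<le> fst p \<and> fst p < snd p" unfolding invs_def by auto
  show ?thesis
    using mono_props[OF finite_invs rng] coeff_pos[OF w sig]
    by (intro exI[of _ "\<Sum>p\<in>invs k w. Poly_Mapping.single (fst p) 1"]) (auto simp: inv_len_invs)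
qed

definition UU :: "nat \<Rightarrow> (nat \<times> nat) set" where
  "UU n = {(j, l). 1 \<le> j \<and> j \<le> l \<and> l \<le> n}"

definition V1 :: "(nat \<times> nat) set \<Rightarrow> bool" where
  "V1 S \<longleftrightarrow> (\<forall>a l m. (a, l) \<in> S \<longrightarrow> a \<le> m \<longrightarrow> m < l \<longrightarrow> (a, m) \<in> S \<or> (Suc m, l) \<in> S)"

definition adm :: "nat \<Rightarrow> (nat \<times> nat) set \<Rightarrow> nat set \<Rightarrow> bool" where
  "adm n S C \<longleftrightarrow> C \<subseteq> {1..Suc n} \<and> (\<forall>a\<in>C. \<forall>m. a \<le> m \<longrightarrow> m \<le> n \<longrightarrow> (a, m) \<in> S \<or> Suc m \<in> C)"

definition topset :: "nat \<Rightarrow> (nat \<Rightarrow> nat) \<Rightarrow> nat \<Rightarrow> nat set" where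
  "topset n w q = {t. 1 \<le> t \<and> t \<le> Suc n \<and> Suc n - q < w t}"

lemma card_topset:
  assumes w: "w permutes {1..Suc n}" and q: "q \<le> Suc n"
  shows "card (topset n w q) = q"
proof -
  have inj: "inj_on w (topset n w q)" using permutes_inj[OF w] by (auto intro: inj_on_subset)
  have img: "w ` topset n w q = {Suc n - q<..Suc n}"
  proof
    show "w ` topset n w q \<subseteq> {Suc n - q<..Suc n}"
    proof
      fix y assume "y \<in> w ` topset n w q"
      then obtain t where t: "t \<in> topset n w q" "y = w t" by blast
      then have "t \<in> {1..Suc n}" unfolding topset_def by auto
      then have "w t \<in> {1..Suc n}" using permutes_in_image[OF w] by blast
      then show "y \<in> {Suc n - q<..Suc n}" using t unfolding topset_def by auto
    qed
    show "{Suc n - q<..Suc n} \<subseteq> w ` topset n w q"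
    proof
      fix y assume y: "y \<in> {Suc n - q<..Suc n}"
      then have "y \<in> {1..Suc n}" by auto
      then have "y \<in> w ` {1..Suc n}" using permutes_image[OF w] by simp
      then obtain t where t: "t \<in> {1..Suc n}" "w t = y" by (metis imageE)
      then have "t \<in> topset n w q" using y unfolding topset_def by auto
      then show "y \<in> w ` topset n w q" using t by blast
    qed
  qed
  have "card (topset n w q) = card (w ` topset n w q)" using inj by (simp add: card_image)
  also have "\<dots> = q" using img q by simp
  finally show ?thesis .
qed

lemma topset_sub: "topset n w q \<subseteq> {1..Suc n}" unfolding topset_def by auto

definition QP :: "nat \<Rightarrow> (nat \<times> nat) set \<Rightarrow> (nat \<Rightarrow> nat) \<Rightarrow> bool" where
  "QP n S w \<longleftrightarrow> w permutes {1..Suc n}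
     \<and> (\<exists>\<phi>. bij_betw \<phi> S (invs (Suc n) w) \<and> (\<forall>p\<in>S. fst (\<phi> p) \<le> fst p \<and> snd p < snd (\<phi> p)))
     \<and> (\<forall>C. adm n S C \<longrightarrow> (\<exists>\<psi>. inj_on \<psi> C \<and> \<psi> ` C \<subseteq> topset n w (card C) \<and> (\<forall>c\<in>C. \<psi> c \<le> c)))"

lemma Q_base: "S \<subseteq> UU 0 \<Longrightarrow> \<exists>w. QP 0 S w"
proof -
  assume "S \<subseteq> UU 0"
  then have S: "S = {}" unfolding UU_def by auto
  have iv: "invs (Suc 0) id = {}" unfolding invs_def by auto
  have "QP 0 S id"
    unfolding QP_def
  proof (intro conjI allI impI)
    show "id permutes {1..Suc 0}" by (rule permutes_id)
    show "\<exists>\<phi>. bij_betw \<phi> S (invs (Suc 0) id) \<and> (\<forall>p\<in>S. fst (\<phi> p) \<le> fst p \<and> snd p < snd (\<phi> p))"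
      using S iv by (intro exI[of _ id]) auto
    fix C assume "adm 0 S C"
    then have C: "C \<subseteq> {1}" unfolding adm_def by auto
    show "\<exists>\<psi>. inj_on \<psi> C \<and> \<psi> ` C \<subseteq> topset 0 id (card C) \<and> (\<forall>c\<in>C. \<psi> c \<le> c)"
    proof (cases "C = {}")
      case True then show ?thesis by auto
    next
      case False
      then have "C = {1}" using C by auto
      then show ?thesis by (intro exI[of _ id]) (auto simp: topset_def)
    qed
  qed
  then show ?thesis by blast
qed

lemma Q_step:
  assumes IH: "\<And>S. S \<subseteq> UU n \<Longrightarrow> V1 S \<Longrightarrow> \<exists>w. QP n S w"
    and SU: "S \<subseteq> UU (Suc n)" and V: "V1 S"
  shows "\<exists>w. QP (Suc n) S w"
proof -
  define S' where "S' = {x\<in>S. snd x \<le> n}"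
  define C' where "C' = {j. (j, Suc n) \<in> S}"
  define Scol where "Scol = {x\<in>S. snd x = Suc n}"
  have S'U: "S' \<subseteq> UU n" using SU unfolding S'_def UU_def by auto
  have V': "V1 S'" using V unfolding V1_def S'_def by fastforce
  have C'sub: "C' \<subseteq> {1..Suc n}" using SU unfolding C'_def UU_def by auto
  have finC': "finite C'" using C'sub by (rule finite_subset) auto
  have admC': "adm n S' C'"
    unfolding adm_def
  proof (intro conjI ballI allI impI)
    show "C' \<subseteq> {1..Suc n}" by (rule C'sub)
    fix a m assume a: "a \<in> C'" and m: "a \<le> m" "m \<le> n"
    have "(a, Suc n) \<in> S" using a unfolding C'_def by auto
    then have "(a, m) \<in> S \<or> (Suc m, Suc n) \<in> S" using V m unfolding V1_def by auto
    then show "(a, m) \<in> S' \<or> Suc m \<in> C'" unfolding S'_def C'_def using m by auto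
  qed
  obtain w' where Q': "QP n S' w'" using IH[OF S'U V'] by blast
  have w': "w' permutes {1..Suc n}" using Q' unfolding QP_def by auto
  obtain \<phi>' where phi': "bij_betw \<phi>' S' (invs (Suc n) w')"
      "\<forall>p\<in>S'. fst (\<phi>' p) \<le> fst p \<and> snd p < snd (\<phi>' p)"
    using Q' unfolding QP_def by auto
  have admP: "\<And>C. adm n S' C \<Longrightarrow> \<exists>\<psi>. inj_on \<psi> C \<and> \<psi> ` C \<subseteq> topset n w' (card C) \<and> (\<forall>c\<in>C. \<psi> c \<le> c)"
    using Q' unfolding QP_def by auto
  define p where "p = card C'"
  have ple: "p \<le> Suc n" unfolding p_def using card_mono[OF _ C'sub] by simp
  obtain \<psi>' where psi': "inj_on \<psi>' C'" "\<psi>' ` C' \<subseteq> topset n w' p" "\<forall>c\<in>C'. \<psi>' c \<le> c"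
    using admP[OF admC'] unfolding p_def by blast
  define M where "M = Suc (Suc n) - p"
  define g where "g v = (if M \<le> v then Suc v else v)" for v
  define w where "w t = (if 1 \<le> t \<and> t \<le> Suc n then g (w' t) else if t = Suc (Suc n) then M else t)" for t
  have M1: "1 \<le> M" "M \<le> Suc (Suc n)" unfolding M_def using ple by auto
  have w'rng: "w' t \<in> {1..Suc n}" if "t \<in> {1..Suc n}" for t
    using that permutes_in_image[OF w'] by blast
  have ginj: "g x = g y \<longleftrightarrow> x = y" for x y unfolding g_def by auto
  have gmono: "g x < g y \<longleftrightarrow> x < y" for x y unfolding g_def by auto
  have gM: "g x \<noteq> M" for x unfolding g_def by auto
  have gge: "x \<le> g x" for x unfolding g_def by auto
  have gtop: "M < g (w' t) \<longleftrightarrow> t \<in> topset n w' p" if "t \<in> {1..Suc n}" for t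
    using that ple unfolding g_def M_def topset_def by auto
  have wperm: "w permutes {1..Suc (Suc n)}"
  proof (rule inj_imp_permutes)
    show "inj_on w {1..Suc (Suc n)}"
    proof (rule inj_onI)
      fix x y assume x: "x \<in> {1..Suc (Suc n)}" and y: "y \<in> {1..Suc (Suc n)}" and e: "w x = w y"
      show "x = y"
      proof (cases "x \<le> Suc n"; cases "y \<le> Suc n")
        assume "x \<le> Suc n" "y \<le> Suc n"
        then have "w' x = w' y" using x y e ginj unfolding w_def by auto
        then show ?thesis using permutes_inj[OF w'] by (metis injD)
      next
        assume "x \<le> Suc n" "\<not> y \<le> Suc n"
        then show ?thesis using x y e gM unfolding w_def by auto
      next
        assume "\<not> x \<le> Suc n" "y \<le> Suc n"
        moreover then have "x = Suc (Suc n)" using x by auto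
        ultimately show ?thesis using y e gM[of "w' y"] unfolding w_def by auto
      next
        assume "\<not> x \<le> Suc n" "\<not> y \<le> Suc n"
        then show ?thesis using x y by auto
      qed
    qed
    show "finite {1..Suc (Suc n)}" by simp
    show "w x \<in> {1..Suc (Suc n)}" if "x \<in> {1..Suc (Suc n)}" for x
    proof (cases "x \<le> Suc n")
      case True
      then have "w' x \<in> {1..Suc n}" using that w'rng by auto
      then show ?thesis using True that M1 unfolding w_def g_def by auto
    next
      case False
      then show ?thesis using that M1 unfolding w_def by auto
    qed
    show "w i = i" if "i \<notin> {1..Suc (Suc n)}" for i
      using that unfolding w_def by auto
  qed
  have invsw: "invs (Suc (Suc n)) w = invs (Suc n) w' \<union> (\<lambda>t. (t, Suc (Suc n))) ` topset n w' p"
  proof (rule set_eqI, clarify)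
    fix i j
    show "((i, j) \<in> invs (Suc (Suc n)) w) = ((i, j) \<in> invs (Suc n) w' \<union> (\<lambda>t. (t, Suc (Suc n))) ` topset n w' p)"
    proof (cases "j \<le> Suc n")
      case True
      then show ?thesis unfolding invs_def w_def using gmono topset_sub by auto
    next
      case False
      show ?thesis
      proof (cases "j = Suc (Suc n)")
        case True
        have "(i, j) \<in> invs (Suc (Suc n)) w \<longleftrightarrow> i \<in> {1..Suc n} \<and> M < g (w' i)"
          unfolding invs_def w_def using True by auto
        also have "\<dots> \<longleftrightarrow> i \<in> topset n w' p" using gtop topset_sub by blast
        finally show ?thesis using True False unfolding invs_def by auto
      next
        case False2: False
        then show ?thesis using False unfolding invs_def using topset_sub by auto
      qed
    qed
  qed
  define \<phi> where "\<phi> x = (if snd x \<le> n then \<phi>' x else (\<psi>' (fst x), Suc (Suc n)))" for x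
  have Ssplit: "S = S' \<union> Scol" using SU unfolding S'_def Scol_def UU_def by auto
  have Scol_img: "Scol = (\<lambda>j. (j, Suc n)) ` C'" unfolding Scol_def C'_def by auto
  have cardScol: "card Scol = p" unfolding Scol_img p_def by (rule card_image) (auto intro: inj_onI)
  have colmem: "fst x \<in> C'" if "x \<in> Scol" for x
  proof -
    have "x = (fst x, Suc n)" using that unfolding Scol_def by (metis (mono_tags) mem_Collect_eq prod.collapse)
    then show ?thesis using that unfolding Scol_def C'_def by (metis (mono_tags) mem_Collect_eq)
  qed
  have bij1: "bij_betw \<phi> S' (invs (Suc n) w')"
    using phi'(1) by (subst bij_betw_cong[where g = \<phi>']) (auto simp: \<phi>_def S'_def)
  have bij2: "bij_betw \<phi> Scol ((\<lambda>t. (t, Suc (Suc n))) ` topset n w' p)"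
  proof (rule bij_betw_imageI)
    show inj: "inj_on \<phi> Scol"
    proof (rule inj_onI)
      fix x y assume x: "x \<in> Scol" and y: "y \<in> Scol" and e: "\<phi> x = \<phi> y"
      have "fst x \<in> C'" "fst y \<in> C'" using x y colmem by auto
      moreover have "\<psi>' (fst x) = \<psi>' (fst y)" using e x y unfolding \<phi>_def Scol_def by auto
      ultimately have "fst x = fst y" using psi'(1) by (meson inj_onD)
      then show "x = y" using x y unfolding Scol_def by (simp add: prod_eq_iff)
    qed
    have sub: "\<phi> ` Scol \<subseteq> (\<lambda>t. (t, Suc (Suc n))) ` topset n w' p"
    proof
      fix z assume "z \<in> \<phi> ` Scol"
      then obtain x where x: "x \<in> Scol" "z = \<phi> x" by blast
      then have "fst x \<in> C'" using colmem by auto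
      then have "\<psi>' (fst x) \<in> topset n w' p" using psi'(2) by auto
      then show "z \<in> (\<lambda>t. (t, Suc (Suc n))) ` topset n w' p" using x unfolding \<phi>_def Scol_def by auto
    qed
    have c1: "card (\<phi> ` Scol) = p" using card_image[OF inj] cardScol by simp
    have c2: "card ((\<lambda>t. (t, Suc (Suc n))) ` topset n w' p) = p"
      using card_topset[OF w' ple] by (subst card_image) (auto intro: inj_onI)
    show "\<phi> ` Scol = (\<lambda>t. (t, Suc (Suc n))) ` topset n w' p"
      using sub c1 c2 by (intro card_subset_eq) (auto simp: topset_def)
  qed
  have disj: "invs (Suc n) w' \<inter> (\<lambda>t. (t, Suc (Suc n))) ` topset n w' p = {}"
    unfolding invs_def by auto
  have bij: "bij_betw \<phi> S (invs (Suc (Suc n)) w)"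
    unfolding Ssplit invsw by (rule bij_betw_combine[OF bij1 bij2 disj])
  have cont: "\<forall>x\<in>S. fst (\<phi> x) \<le> fst x \<and> snd x < snd (\<phi> x)"
  proof
    fix x assume x: "x \<in> S"
    show "fst (\<phi> x) \<le> fst x \<and> snd x < snd (\<phi> x)"
    proof (cases "snd x \<le> n")
      case True
      then have "x \<in> S'" using x unfolding S'_def by auto
      then show ?thesis using phi'(2) True unfolding \<phi>_def by auto
    next
      case False
      then have "snd x = Suc n" using x SU unfolding UU_def by auto
      then have "fst x \<in> C'" using x unfolding C'_def by (metis prod.collapse mem_Collect_eq)
      then show ?thesis using psi'(3) False \<open>snd x = Suc n\<close> unfolding \<phi>_def by auto
    qed
  qed
  have admw: "\<exists>\<psi>. inj_on \<psi> C \<and> \<psi> ` C \<subseteq> topset (Suc n) w (card C) \<and> (\<forall>c\<in>C. \<psi> c \<le> c)"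
    if admC: "adm (Suc n) S C" for C
  proof -
    have Csub: "C \<subseteq> {1..Suc (Suc n)}" using admC unfolding adm_def by auto
    have finC: "finite C" using Csub by (rule finite_subset) auto
    show ?thesis
    proof (cases "Suc (Suc n) \<in> C")
      case False
      have CC': "C \<subseteq> C'"
      proof
        fix a assume a: "a \<in> C"
        then have "a \<in> {1..Suc (Suc n)}" "a \<noteq> Suc (Suc n)" using Csub False by auto
        then have "a \<le> Suc n" by auto
        then have "(a, Suc n) \<in> S \<or> Suc (Suc n) \<in> C" using admC a unfolding adm_def by auto
        then show "a \<in> C'" using False unfolding C'_def by auto
      qed
      have admC0: "adm n S' C"
        unfolding adm_def
      proof (intro conjI ballI allI impI)
        show "C \<subseteq> {1..Suc n}" using CC' C'sub by auto
        fix a m assume a: "a \<in> C" and m: "a \<le> m" "m \<le> n"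
        then have "(a, m) \<in> S \<or> Suc m \<in> C" using admC unfolding adm_def by auto
        then show "(a, m) \<in> S' \<or> Suc m \<in> C" unfolding S'_def using m by auto
      qed
      obtain \<psi> where psi: "inj_on \<psi> C" "\<psi> ` C \<subseteq> topset n w' (card C)" "\<forall>c\<in>C. \<psi> c \<le> c"
        using admP[OF admC0] by blast
      have qp: "card C \<le> p" unfolding p_def using card_mono[OF finC' CC'] .
      have "topset n w' (card C) \<subseteq> topset (Suc n) w (card C)"
      proof
        fix t assume t: "t \<in> topset n w' (card C)"
        then have t1: "1 \<le> t" "t \<le> Suc n" "Suc n - card C < w' t" unfolding topset_def by auto
        then have "M \<le> w' t" unfolding M_def using qp ple by auto
        then have "w t = Suc (w' t)" using t1 unfolding w_def g_def by auto
        then show "t \<in> topset (Suc n) w (card C)" using t1 qp ple unfolding topset_def by auto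
      qed
      then show ?thesis using psi by blast
    next
      case True
      define C0 where "C0 = C - {Suc (Suc n)}"
      have admC0: "adm n S' C0"
        unfolding adm_def
      proof (intro conjI ballI allI impI)
        show "C0 \<subseteq> {1..Suc n}" using Csub unfolding C0_def by (auto simp: le_Suc_eq)
        fix a m assume a: "a \<in> C0" and m: "a \<le> m" "m \<le> n"
        then have "(a, m) \<in> S \<or> Suc m \<in> C" using admC unfolding adm_def C0_def by auto
        then show "(a, m) \<in> S' \<or> Suc m \<in> C0" unfolding S'_def C0_def using m by auto
      qed
      obtain \<psi>0 where psi0: "inj_on \<psi>0 C0" "\<psi>0 ` C0 \<subseteq> topset n w' (card C0)" "\<forall>c\<in>C0. \<psi>0 c \<le> c"
        using admP[OF admC0] by blast
      have Cins: "C = insert (Suc (Suc n)) C0" "Suc (Suc n) \<notin> C0" using True unfolding C0_def by auto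
      have finC0: "finite C0" using finC unfolding C0_def by auto
      have cardC: "card C = Suc (card C0)" using Cins finC0 by simp
      have cardle: "card C \<le> Suc (Suc n)" using card_mono[OF _ Csub] by simp
      have sub0: "topset n w' (card C0) \<subseteq> topset (Suc n) w (card C)"
      proof
        fix t assume t: "t \<in> topset n w' (card C0)"
        then have t1: "1 \<le> t" "t \<le> Suc n" "Suc n - card C0 < w' t" unfolding topset_def by auto
        have "w' t \<le> w t" using t1 gge unfolding w_def by auto
        then show "t \<in> topset (Suc n) w (card C)" using t1 cardC unfolding topset_def by auto
      qed
      have ctop: "card (topset (Suc n) w (card C)) = card C" using card_topset[OF wperm cardle] .
      have "card (\<psi>0 ` C0) \<le> card C0" by (rule card_image_le[OF finC0])
      then have "card (\<psi>0 ` C0) < card (topset (Suc n) w (card C))" using ctop cardC by simp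
      then have "\<not> topset (Suc n) w (card C) \<subseteq> \<psi>0 ` C0"
        using card_mono[OF finite_imageI[OF finC0]] by (meson not_le)
      then obtain e where e: "e \<in> topset (Suc n) w (card C)" "e \<notin> \<psi>0 ` C0" by blast
      define \<psi> where "\<psi> = \<psi>0(Suc (Suc n) := e)"
      have psiC0: "\<psi> ` C0 = \<psi>0 ` C0" unfolding \<psi>_def using Cins(2) by auto
      have "inj_on \<psi> C0" using psi0(1) Cins(2) unfolding \<psi>_def inj_on_def by auto
      then have inj: "inj_on \<psi> C" unfolding Cins(1) using e psiC0 Cins(2) unfolding \<psi>_def by auto
      have "\<psi> ` C = insert (\<psi> (Suc (Suc n))) (\<psi> ` C0)" using Cins(1) by simp
      then have imgeq: "\<psi> ` C = insert e (\<psi>0 ` C0)" using psiC0 by (simp add: \<psi>_def)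
      have img: "\<psi> ` C \<subseteq> topset (Suc n) w (card C)" unfolding imgeq using e psi0(2) sub0 by auto
      have le: "\<forall>c\<in>C. \<psi> c \<le> c"
      proof
        fix c assume c: "c \<in> C"
        show "\<psi> c \<le> c"
        proof (cases "c = Suc (Suc n)")
          case True then show ?thesis using e unfolding \<psi>_def topset_def by auto
        next
          case False then show ?thesis using c psi0(3) unfolding \<psi>_def Cins(1) by auto
        qed
      qed
      show ?thesis using inj img le by blast
    qed
  qed
  have "QP (Suc n) S w" unfolding QP_def using wperm bij cont admw by blast
  then show ?thesis by blast
qed

lemma Q_all: "S \<subseteq> UU n \<Longrightarrow> V1 S \<Longrightarrow> \<exists>w. QP n S w"
proof (induction n arbitrary: S)
  case 0 then show ?case using Q_base by blast
next
  case (Suc n) then show ?case using Q_step by blast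
qed

definition validm :: "nat \<Rightarrow> (nat \<Rightarrow>\<^sub>0 nat) \<Rightarrow> (nat \<times> nat \<Rightarrow> nat \<times> nat) \<Rightarrow> bool" where
  "validm k b f \<longleftrightarrow> inj_on f (lower_B k b) \<and> f ` lower_B k b \<subseteq> upper_B k
      \<and> (\<forall>d\<in>lower_B k b. fst (f d) \<le> fst d \<and> fst d \<le> snd (f d))"

definition costm :: "nat \<Rightarrow> (nat \<Rightarrow>\<^sub>0 nat) \<Rightarrow> (nat \<times> nat \<Rightarrow> nat \<times> nat) \<Rightarrow> nat" where
  "costm k b f = (\<Sum>d\<in>lower_B k b. snd (f d) - fst (f d))"

lemma lower_B_Sigma: "lower_B k b = Sigma {1..k-1} (\<lambda>i. {1..Poly_Mapping.lookup b i})"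
  unfolding lower_B_def by auto

lemma finite_lower_B: "finite (lower_B k b)"
  unfolding lower_B_Sigma by auto

lemma min_matching_V1:
  assumes v: "validm k b f" and minf: "\<And>f'. validm k b f' \<Longrightarrow> costm k b f \<le> costm k b f'"
  shows "V1 (f ` lower_B k b)"
  unfolding V1_def
proof (intro allI impI, rule ccontr)
  fix a l m
  assume al: "(a, l) \<in> f ` lower_B k b" and m: "a \<le> m" "m < l"
    and nn: "\<not> ((a, m) \<in> f ` lower_B k b \<or> (Suc m, l) \<in> f ` lower_B k b)"
  define L where "L = lower_B k b"
  obtain d0 where d0: "d0 \<in> L" "f d0 = (a, l)" using al unfolding L_def by (metis imageE)
  have vi: "inj_on f L" "f ` L \<subseteq> upper_B k" "\<forall>d\<in>L. fst (f d) \<le> fst d \<and> fst d \<le> snd (f d)"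
    using v unfolding validm_def L_def by auto
  have aup: "1 \<le> a" "l \<le> k - 1" using vi(2) d0 unfolding upper_B_def by auto
  have ai: "a \<le> fst d0" "fst d0 \<le> l" using vi(3) d0 by auto
  define new where "new = (if fst d0 \<le> m then (a, m) else (Suc m, l))"
  define f' where "f' = f(d0 := new)"
  have newS: "new \<notin> f ` L" using nn unfolding new_def L_def by auto
  have newU: "new \<in> upper_B k" using aup m unfolding new_def upper_B_def by auto
  have newc: "fst new \<le> fst d0 \<and> fst d0 \<le> snd new" using ai unfolding new_def by auto
  have v': "validm k b f'"
    unfolding validm_def L_def[symmetric]
  proof (intro conjI)
    show "inj_on f' L"
    proof (rule inj_onI)
      fix x y assume x: "x \<in> L" and y: "y \<in> L" and e: "f' x = f' y"
      show "x = y"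
      proof (cases "x = d0"; cases "y = d0")
        assume "x \<noteq> d0" "y \<noteq> d0"
        then show ?thesis using e x y vi(1) unfolding f'_def by (auto dest: inj_onD)
      next
        assume "x = d0" "y \<noteq> d0"
        then show ?thesis using e y newS unfolding f'_def by auto
      next
        assume "x \<noteq> d0" "y = d0"
        then show ?thesis using e x newS unfolding f'_def by (metis fun_upd_apply image_eqI)
      qed auto
    qed
    show "f' ` L \<subseteq> upper_B k" using vi(2) newU unfolding f'_def by auto
    show "\<forall>d\<in>L. fst (f' d) \<le> fst d \<and> fst d \<le> snd (f' d)" using vi(3) newc unfolding f'_def by auto
  qed
  have "costm k b f' < costm k b f"
    unfolding costm_def L_def[symmetric]
  proof (rule sum_strict_mono_ex1)
    show "finite L" unfolding L_def by (rule finite_lower_B)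
    show "\<forall>x\<in>L. snd (f' x) - fst (f' x) \<le> snd (f x) - fst (f x)"
      using d0 m unfolding f'_def new_def by auto
    show "\<exists>x\<in>L. snd (f' x) - fst (f' x) < snd (f x) - fst (f x)"
      using d0 m ai unfolding f'_def new_def by (intro bexI[of _ d0]) auto
  qed
  then show False using minf[OF v'] by simp
qed

lemma card_fibers_bij:
  assumes h: "bij_betw h L T"
  shows "card {p\<in>T. fst (inv_into L h p) = i} = card {d\<in>L. fst d = i}"
proof -
  have "{p\<in>T. fst (inv_into L h p) = i} = h ` {d\<in>L. fst d = i}"
  proof
    show "{p\<in>T. fst (inv_into L h p) = i} \<subseteq> h ` {d\<in>L. fst d = i}"
    proof
      fix p assume p: "p \<in> {p\<in>T. fst (inv_into L h p) = i}"
      then have "inv_into L h p \<in> L" "h (inv_into L h p) = p"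
        using h bij_betw_inv_into_right[OF h] by (auto intro: bij_betw_apply[OF bij_betw_inv_into[OF h]])
      then show "p \<in> h ` {d\<in>L. fst d = i}" using p by (metis (mono_tags, lifting) image_eqI mem_Collect_eq)
    qed
    show "h ` {d\<in>L. fst d = i} \<subseteq> {p\<in>T. fst (inv_into L h p) = i}"
      using bij_betw_inv_into_left[OF h] bij_betw_apply[OF h] by auto
  qed
  moreover have "inj_on h {d\<in>L. fst d = i}" using h unfolding bij_betw_def by (auto intro: inj_on_subset)
  ultimately show ?thesis by (simp add: card_image)
qed

lemma card_lower_fiber:
  assumes "exp_seq k b"
  shows "card {d\<in>lower_B k b. fst d = i} = Poly_Mapping.lookup b i"
proof (cases "i \<in> {1..k-1}")
  case True
  have "{d\<in>lower_B k b. fst d = i} = (\<lambda>t. (i, t)) ` {1..Poly_Mapping.lookup b i}"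
    using True unfolding lower_B_def by auto
  then show ?thesis by (simp add: card_image inj_on_def)
next
  case False
  then have "i \<notin> Poly_Mapping.keys b" using assms unfolding exp_seq_def by auto
  then have "Poly_Mapping.lookup b i = 0" by (simp add: in_keys_iff)
  moreover have "{d\<in>lower_B k b. fst d = i} = {}" using False unfolding lower_B_def by auto
  ultimately show ?thesis by (metis card.empty)
qed

lemma part2:
  assumes k: "k \<ge> 2" and e: "exp_seq k b" and ms: "matching_seq k b"
  shows "\<exists>w. w permutes {1..k} \<and> inv_len k w = (\<Sum>i\<in>{1..k-1}. Poly_Mapping.lookup b i)
                 \<and> coeff_v (R_poly k w) b \<noteq> 0"
proof -
  define L where "L = lower_B k b"
  obtain f0 where "validm k b f0" using ms unfolding matching_seq_def validm_def by blast
  then have exP: "\<exists>c f. validm k b f \<and> costm k b f = c" by blast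
  define c0 where "c0 = (LEAST c. \<exists>f. validm k b f \<and> costm k b f = c)"
  obtain f where f: "validm k b f" "costm k b f = c0"
    using LeastI_ex[of "\<lambda>c. \<exists>f. validm k b f \<and> costm k b f = c"] exP unfolding c0_def by blast
  have minf: "costm k b f \<le> costm k b f'" if "validm k b f'" for f'
    using f(2) that unfolding c0_def by (auto intro: Least_le)
  have V: "V1 (f ` L)" using min_matching_V1[OF f(1) minf] unfolding L_def by blast
  have vi: "inj_on f L" "f ` L \<subseteq> upper_B k" "\<forall>d\<in>L. fst (f d) \<le> fst d \<and> fst d \<le> snd (f d)"
    using f(1) unfolding validm_def L_def by auto
  have SU: "f ` L \<subseteq> UU (k - 1)" using vi(2) unfolding upper_B_def UU_def by auto
  obtain w where Q: "QP (k - 1) (f ` L) w" using Q_all[OF SU V] by blast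
  have kk: "Suc (k - 1) = k" using k by auto
  have w: "w permutes {1..k}" using Q kk unfolding QP_def by auto
  obtain \<phi> where phi: "bij_betw \<phi> (f ` L) (invs k w)" "\<forall>p\<in>f ` L. fst (\<phi> p) \<le> fst p \<and> snd p < snd (\<phi> p)"
    using Q kk unfolding QP_def by auto
  define h where "h = \<phi> \<circ> f"
  have hb: "bij_betw h L (invs k w)" unfolding h_def
    using bij_betw_trans[OF bij_betw_imageI[OF vi(1) refl] phi(1)] .
  define \<sigma> where "\<sigma> p = fst (inv_into L h p)" for p
  have sig: "\<forall>p\<in>invs k w. fst p \<le> \<sigma> p \<and> \<sigma> p < snd p"
  proof
    fix p assume p: "p \<in> invs k w"
    define d where "d = inv_into L h p"
    have d: "d \<in> L" "h d = p" unfolding d_def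
      using bij_betw_apply[OF bij_betw_inv_into[OF hb] p] bij_betw_inv_into_right[OF hb p] by auto
    have "fst (\<phi> (f d)) \<le> fst (f d)" "snd (f d) < snd (\<phi> (f d))" using phi(2) d(1) by auto
    moreover have "\<sigma> p = fst d" unfolding \<sigma>_def d_def ..
    moreover have "p = \<phi> (f d)" using d(2) unfolding h_def by auto
    ultimately show "fst p \<le> \<sigma> p \<and> \<sigma> p < snd p"
      using vi(3) d(1) by fastforce
  qed
  have rng: "\<forall>p\<in>invs k w. \<sigma> p \<in> {1..k-1}"
  proof
    fix p assume p: "p \<in> invs k w"
    then have "1 \<le> fst p" "snd p \<le> k" unfolding invs_def by auto
    then show "\<sigma> p \<in> {1..k-1}" using sig p by fastforce
  qed
  have beq: "(\<Sum>p\<in>invs k w. Poly_Mapping.single (\<sigma> p) (1::nat)) = b"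
  proof (rule poly_mapping_eqI)
    fix i
    show "Poly_Mapping.lookup (\<Sum>p\<in>invs k w. Poly_Mapping.single (\<sigma> p) (1::nat)) i = Poly_Mapping.lookup b i"
      unfolding lookup_sum_single[OF finite_invs] \<sigma>_def card_fibers_bij[OF hb]
      unfolding L_def by (rule card_lower_fiber[OF e])
  qed
  have c: "coeff_v (R_poly k w) b \<ge> 1" using coeff_pos[OF w sig] beq by simp
  have "inv_len k w = (\<Sum>i\<in>{1..k-1}. Poly_Mapping.lookup b i)"
    using mono_props(2)[OF finite_invs rng] beq by (simp add: inv_len_invs)
  then show ?thesis using w c by auto
qed

theorem mainTheorem9:
  fixes k :: nat
  assumes "k \<ge> 2"
  shows "(\<forall>w. w permutes {1..k} \<longrightarrow>
            (\<exists>b. exp_seq k b \<and> (\<Sum>i\<in>{1..k-1}. Poly_Mapping.lookup b i) = inv_len k w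
                 \<and> coeff_v (R_poly k w) b \<noteq> 0))
       \<and> (\<forall>b. exp_seq k b \<and> matching_seq k b \<longrightarrow>
            (\<exists>w. w permutes {1..k} \<and> inv_len k w = (\<Sum>i\<in>{1..k-1}. Poly_Mapping.lookup b i)
                 \<and> coeff_v (R_poly k w) b \<noteq> 0))"
  using part1 part2[OF assms] by blast

end
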